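(* Let $G$ be a finite perfect graph, let $\omega(G)$ denote its clique number and $\alpha(G)$ its independence number, and let logarithms be base $2$. Then: (i) the edge set $E(G)$ can be partitioned into $\lceil\log(\omega(G))\rceil$ bipartite subgraphs of $G$; (ii) the edge set $E(G)$ can be partitioned into $1+\lceil\log(\alpha(G))\rceil$ comparability subgraphs of $G$.
   Context: A graph $G$ is perfect if every induced subgraph $H$ of $G$ satisfies $\omega(H)=\chi(H)$. A comparability graph is a graph whose vertices are the elements of a partially ordered set, two vertices being adjacent iff the corresponding elements are comparable (equivalently, a graph admitting a transitive orientation). Partitioning $E(G)$ into subgraphs means writing $E(G)$ as a disjoint union of edge sets of subgraphs of $G$. *)

theory Defs
  imports Complex_Main
begin

definition graph :: "'a set \<Rightarrow> 'a set set \<Rightarrow> bool" where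
  "graph V E \<longleftrightarrow> finite V \<and> (\<forall>e\<in>E. \<exists>u v. u \<in> V \<and> v \<in> V \<and> u \<noteq> v \<and> e = {u, v})"

definition induced_edges :: "'a set set \<Rightarrow> 'a set \<Rightarrow> 'a set set" where
  "induced_edges E S = {e \<in> E. e \<subseteq> S}"

definition is_clique :: "'a set \<Rightarrow> 'a set set \<Rightarrow> 'a set \<Rightarrow> bool" where
  "is_clique V E S \<longleftrightarrow> S \<subseteq> V \<and> (\<forall>u\<in>S. \<forall>v\<in>S. u \<noteq> v \<longrightarrow> {u, v} \<in> E)"

definition is_independent :: "'a set \<Rightarrow> 'a set set \<Rightarrow> 'a set \<Rightarrow> bool" where
  "is_independent V E S \<longleftrightarrow> S \<subseteq> V \<and> (\<forall>u\<in>S. \<forall>v\<in>S. {u, v} \<notin> E)"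

definition clique_number :: "'a set \<Rightarrow> 'a set set \<Rightarrow> nat" where
  "clique_number V E = Max {card S | S. is_clique V E S}"

definition independence_number :: "'a set \<Rightarrow> 'a set set \<Rightarrow> nat" where
  "independence_number V E = Max {card S | S. is_independent V E S}"

definition colorable :: "'a set \<Rightarrow> 'a set set \<Rightarrow> nat \<Rightarrow> bool" where
  "colorable V E k \<longleftrightarrow> (\<exists>f :: 'a \<Rightarrow> nat. f ` V \<subseteq> {..<k} \<and>
       (\<forall>u\<in>V. \<forall>v\<in>V. {u, v} \<in> E \<longrightarrow> f u \<noteq> f v))"

definition chromatic_number :: "'a set \<Rightarrow> 'a set set \<Rightarrow> nat" where
  "chromatic_number V E = (LEAST k. colorable V E k)"

definition perfect :: "'a set \<Rightarrow> 'a set set \<Rightarrow> bool" where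
  "perfect V E \<longleftrightarrow> (\<forall>S\<subseteq>V. clique_number S (induced_edges E S)
                              = chromatic_number S (induced_edges E S))"

definition bipartite :: "'a set \<Rightarrow> 'a set set \<Rightarrow> bool" where
  "bipartite V E \<longleftrightarrow> colorable V E 2"

definition comparability :: "'a set \<Rightarrow> 'a set set \<Rightarrow> bool" where
  "comparability V E \<longleftrightarrow> (\<exists>r :: 'a \<Rightarrow> 'a \<Rightarrow> bool.
      (\<forall>u v. r u v \<longrightarrow> u \<in> V \<and> v \<in> V) \<and>
      (\<forall>u. \<not> r u u) \<and>
      (\<forall>u v w. r u v \<longrightarrow> r v w \<longrightarrow> r u w) \<and>
      (\<forall>u\<in>V. \<forall>v\<in>V. u \<noteq> v \<longrightarrow> ({u, v} \<in> E \<longleftrightarrow> r u v \<or> r v u)))"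

text \<open>E can be partitioned into k (possibly empty) edge sets, each of which forms
  a subgraph (on vertex set V) having property P.\<close>
definition edge_partition_into :: "('a set \<Rightarrow> 'a set set \<Rightarrow> bool) \<Rightarrow> 'a set \<Rightarrow> 'a set set \<Rightarrow> nat \<Rightarrow> bool" where
  "edge_partition_into P V E k \<longleftrightarrow> (\<exists>F :: nat \<Rightarrow> 'a set set.
      (\<forall>i<k. F i \<subseteq> E \<and> P V (F i)) \<and>
      (\<Union>i<k. F i) = E \<and>
      (\<forall>i<k. \<forall>j<k. i \<noteq> j \<longrightarrow> F i \<inter> F j = {}))"

end

theory Submission
  imports Defs
begin


definition fdb :: "nat \<Rightarrow> nat \<Rightarrow> nat" where
  "fdb a b = (LEAST i. bit a i \<noteq> bit b i)"

lemma fdb_sym: "fdb a b = fdb b a"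
  unfolding fdb_def by metis

lemma fdb_bit: assumes "a \<noteq> b" shows "bit a (fdb a b) \<noteq> bit b (fdb a b)"
proof -
  from assms obtain i where "bit a i \<noteq> bit b i" using bit_eq_iff by blast
  then show ?thesis unfolding fdb_def by (rule LeastI)
qed

lemma bit_lt_pow: assumes "(a::nat) < 2^k" "bit a i" shows "i < k"
proof (rule ccontr)
  assume "\<not> i < k"
  then have "a div 2^i = 0" using assms(1)
    by (metis div_less le_less_trans not_le power_increasing_iff one_less_numeral_iff semiring_norm(76))
  then show False using assms(2) by (simp add: bit_iff_odd)
qed

lemma fdb_less: assumes "a \<noteq> b" "(a::nat) < 2^k" "b < 2^k" shows "fdb a b < k"
  using fdb_bit[OF assms(1)] bit_lt_pow assms by blast

lemma log_ceil: assumes "(w::nat) \<ge> 1" shows "w \<le> 2 ^ nat \<lceil>log 2 (real w)\<rceil>"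
proof -
  have "real w = 2 powr (log 2 (real w))" using assms by simp
  also have "\<dots> \<le> 2 powr (real (nat \<lceil>log 2 (real w)\<rceil>))"
    by (intro powr_mono) (auto, linarith)
  also have "\<dots> = real (2 ^ nat \<lceil>log 2 (real w)\<rceil>)"
    by (simp add: powr_realpow)
  finally show ?thesis by linarith
qed



lemma graph_edge: "graph V E \<Longrightarrow> e \<in> E \<Longrightarrow> \<exists>u v. u \<in> V \<and> v \<in> V \<and> u \<noteq> v \<and> e = {u, v}"
  unfolding graph_def by blast

lemma graph_noloop: "graph V E \<Longrightarrow> {u} \<notin> E"
  unfolding graph_def by fastforce

lemma graph_mem: "graph V E \<Longrightarrow> {u, v} \<in> E \<Longrightarrow> u \<in> V \<and> v \<in> V \<and> u \<noteq> v"
  unfolding graph_def by (metis doubleton_eq_iff)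

lemma graph_induced: "graph V E \<Longrightarrow> S \<subseteq> V \<Longrightarrow> graph S (induced_edges E S)"
  unfolding graph_def induced_edges_def by (auto simp: finite_subset) (metis insert_subset)

lemma induced_mem: "{u, v} \<in> induced_edges E S \<longleftrightarrow> {u, v} \<in> E \<and> u \<in> S \<and> v \<in> S"
  unfolding induced_edges_def by auto

lemma induced_all: "graph V E \<Longrightarrow> induced_edges E V = E"
  unfolding induced_edges_def graph_def by auto

lemma graph_eq:
  assumes "graph V E1" "graph V E2" "\<And>u v. u \<in> V \<Longrightarrow> v \<in> V \<Longrightarrow> {u, v} \<in> E1 \<longleftrightarrow> {u, v} \<in> E2"
  shows "E1 = E2"
proof
  show "E1 \<subseteq> E2"
  proof
    fix e assume "e \<in> E1"
    then obtain u v where "u \<in> V" "v \<in> V" "e = {u, v}" using graph_edge[OF assms(1)] by blast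
    then show "e \<in> E2" using assms(3) \<open>e \<in> E1\<close> by blast
  qed
  show "E2 \<subseteq> E1"
  proof
    fix e assume "e \<in> E2"
    then obtain u v where "u \<in> V" "v \<in> V" "e = {u, v}" using graph_edge[OF assms(2)] by blast
    then show "e \<in> E1" using assms(3) \<open>e \<in> E2\<close> by blast
  qed
qed

lemma induced_induced: "T \<subseteq> S \<Longrightarrow> induced_edges (induced_edges E S) T = induced_edges E T"
  unfolding induced_edges_def by auto

lemma perfect_induced: "perfect V E \<Longrightarrow> S \<subseteq> V \<Longrightarrow> perfect S (induced_edges E S)"
  unfolding perfect_def by (simp add: induced_induced)

lemma perfect_sub:
  assumes "perfect V E" "graph V E" "S \<subseteq> V" "graph S E2"
    "\<And>u v. u \<in> S \<Longrightarrow> v \<in> S \<Longrightarrow> {u, v} \<in> E2 \<longleftrightarrow> {u, v} \<in> E"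
  shows "perfect S E2"
proof -
  have "E2 = induced_edges E S"
    by (rule graph_eq[OF assms(4) graph_induced[OF assms(2,3)]]) (simp add: induced_mem assms(5))
  then show ?thesis using perfect_induced assms(1,3) by blast
qed

lemma clique_set_fin: "finite V \<Longrightarrow> finite {card S | S. is_clique V E S} \<and> {card S | S. is_clique V E S} \<noteq> {}"
proof
  assume "finite V"
  have "{card S | S. is_clique V E S} \<subseteq> card ` Pow V" unfolding is_clique_def by auto
  then show "finite {card S | S. is_clique V E S}" using \<open>finite V\<close> finite_subset by blast
  have "is_clique V E {}" unfolding is_clique_def by auto
  then show "{card S | S. is_clique V E S} \<noteq> {}" by blast
qed

lemma indep_set_fin: "finite V \<Longrightarrow> finite {card S | S. is_independent V E S} \<and> {card S | S. is_independent V E S} \<noteq> {}"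
proof
  assume "finite V"
  have "{card S | S. is_independent V E S} \<subseteq> card ` Pow V" unfolding is_independent_def by auto
  then show "finite {card S | S. is_independent V E S}" using \<open>finite V\<close> finite_subset by blast
  have "is_independent V E {}" unfolding is_independent_def by auto
  then show "{card S | S. is_independent V E S} \<noteq> {}" by blast
qed

lemma cn_ge: "finite V \<Longrightarrow> is_clique V E S \<Longrightarrow> card S \<le> clique_number V E"
  unfolding clique_number_def using clique_set_fin by (metis (mono_tags, lifting) Max_ge mem_Collect_eq)

lemma cn_obtain: "finite V \<Longrightarrow> \<exists>S. is_clique V E S \<and> card S = clique_number V E"
  unfolding clique_number_def using clique_set_fin[of V E] Max_in by fastforce

lemma cn_le: "finite V \<Longrightarrow> (\<And>S. is_clique V E S \<Longrightarrow> card S \<le> k) \<Longrightarrow> clique_number V E \<le> k"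
  using cn_obtain by metis

lemma in_ge: "finite V \<Longrightarrow> is_independent V E S \<Longrightarrow> card S \<le> independence_number V E"
  unfolding independence_number_def using indep_set_fin by (metis (mono_tags, lifting) Max_ge mem_Collect_eq)

lemma in_obtain: "finite V \<Longrightarrow> \<exists>S. is_independent V E S \<and> card S = independence_number V E"
  unfolding independence_number_def using indep_set_fin[of V E] Max_in by fastforce

lemma colorable_card: assumes "graph V E" shows "colorable V E (card V)"
proof -
  have "finite V" using assms unfolding graph_def by blast
  then obtain h where h: "bij_betw h V {0..<card V}" using ex_bij_betw_finite_nat by blast
  have "h ` V \<subseteq> {..<card V}" using h bij_betw_imp_surj_on by fastforce
  moreover have "\<forall>u\<in>V. \<forall>v\<in>V. {u, v} \<in> E \<longrightarrow> h u \<noteq> h v"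
  proof (intro ballI impI)
    fix u v assume "u \<in> V" "v \<in> V" "{u, v} \<in> E"
    then have "u \<noteq> v" using graph_mem[OF assms] by blast
    then show "h u \<noteq> h v" using h \<open>u \<in> V\<close> \<open>v \<in> V\<close> unfolding bij_betw_def inj_on_def by blast
  qed
  ultimately show ?thesis unfolding colorable_def by blast
qed

lemma chi_colorable: "graph V E \<Longrightarrow> colorable V E (chromatic_number V E)"
  unfolding chromatic_number_def by (rule LeastI, rule colorable_card)

lemma chi_le: "colorable V E k \<Longrightarrow> chromatic_number V E \<le> k"
  unfolding chromatic_number_def by (rule Least_le)

lemma clique_le_colors:
  assumes "colorable V E k" "is_clique V E S"
  shows "card S \<le> k"
proof -
  obtain f where f: "f ` V \<subseteq> {..<k}" "\<forall>u\<in>V. \<forall>v\<in>V. {u, v} \<in> E \<longrightarrow> f u \<noteq> f v"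
    using assms(1) unfolding colorable_def by blast
  have SV: "S \<subseteq> V" using assms(2) unfolding is_clique_def by blast
  have "inj_on f S"
  proof (rule inj_onI, rule ccontr)
    fix u v assume "u \<in> S" "v \<in> S" "f u = f v" "u \<noteq> v"
    then have "{u, v} \<in> E" using assms(2) unfolding is_clique_def by blast
    then show False using f(2) SV \<open>u \<in> S\<close> \<open>v \<in> S\<close> \<open>f u = f v\<close> by blast
  qed
  moreover have "f ` S \<subseteq> {..<k}" using f(1) SV by blast
  ultimately have "card S \<le> card {..<k}" using card_inj_on_le[OF _ _ finite_lessThan] by blast
  then show ?thesis by simp
qed

lemma cn_le_chi: "graph V E \<Longrightarrow> clique_number V E \<le> chromatic_number V E"
proof -
  assume g: "graph V E"
  then have "finite V" unfolding graph_def by blast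
  then obtain S where "is_clique V E S" "card S = clique_number V E" using cn_obtain by blast
  then show ?thesis using clique_le_colors[OF chi_colorable[OF g], of S] by simp
qed

lemma perfect_eq: "perfect V E \<Longrightarrow> graph V E \<Longrightarrow> chromatic_number V E = clique_number V E"
proof -
  assume "perfect V E" "graph V E"
  then have "clique_number V (induced_edges E V) = chromatic_number V (induced_edges E V)"
    unfolding perfect_def by (meson order_refl)
  then show ?thesis using induced_all[OF \<open>graph V E\<close>] by simp
qed

lemma color_indep_bound:
  assumes "graph V E" "colorable V E k" "\<And>A. is_independent V E A \<Longrightarrow> card A \<le> a"
  shows "card V \<le> k * a"
proof -
  obtain f where f: "f ` V \<subseteq> {..<k}" "\<forall>u\<in>V. \<forall>v\<in>V. {u, v} \<in> E \<longrightarrow> f u \<noteq> f v"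
    using assms(2) unfolding colorable_def by blast
  have "V = (\<Union>c\<in>{..<k}. {u\<in>V. f u = c})"
  proof
    show "V \<subseteq> (\<Union>c\<in>{..<k}. {u\<in>V. f u = c})"
    proof
      fix u assume "u \<in> V"
      then have "f u \<in> {..<k}" using f(1) by blast
      then show "u \<in> (\<Union>c\<in>{..<k}. {u\<in>V. f u = c})" using \<open>u \<in> V\<close> by blast
    qed
  qed blast
  then have "card V \<le> (\<Sum>c\<in>{..<k}. card {u\<in>V. f u = c})"
    using card_UN_le[OF finite_lessThan, of "\<lambda>c. {u\<in>V. f u = c}" k] by simp
  also have "\<dots> \<le> (\<Sum>c\<in>{..<k}. a)"
  proof (rule sum_mono)
    fix c
    have "is_independent V E {u\<in>V. f u = c}" unfolding is_independent_def using f(2) by blast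
    then show "card {u\<in>V. f u = c} \<le> a" using assms(3) by blast
  qed
  finally show ?thesis by simp
qed



lemma iso_graph:
  assumes inj: "inj_on f V" and g1: "graph V E" and g2: "graph (f ` V) E2"
    and adj: "\<And>u v. u \<in> V \<Longrightarrow> v \<in> V \<Longrightarrow> {f u, f v} \<in> E2 \<longleftrightarrow> {u, v} \<in> E"
  shows "clique_number (f ` V) E2 = clique_number V E \<and> chromatic_number (f ` V) E2 = chromatic_number V E"
proof
  have "{card S | S. is_clique V E S} = {card S' | S'. is_clique (f ` V) E2 S'}"
  proof
    show "{card S | S. is_clique V E S} \<subseteq> {card S' | S'. is_clique (f ` V) E2 S'}"
    proof
      fix n assume "n \<in> {card S | S. is_clique V E S}"
      then obtain S where S: "is_clique V E S" "n = card S" by blast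
      have SV: "S \<subseteq> V" using S(1) unfolding is_clique_def by blast
      have "is_clique (f ` V) E2 (f ` S)"
        unfolding is_clique_def
      proof (intro conjI ballI impI)
        show "f ` S \<subseteq> f ` V" using SV by blast
        fix a b assume "a \<in> f ` S" "b \<in> f ` S" "a \<noteq> b"
        then obtain u v where "u \<in> S" "v \<in> S" "a = f u" "b = f v" by blast
        then have "u \<noteq> v" using \<open>a \<noteq> b\<close> by blast
        then have "{u, v} \<in> E" using S(1) \<open>u \<in> S\<close> \<open>v \<in> S\<close> unfolding is_clique_def by blast
        then show "{a, b} \<in> E2" using adj SV \<open>u \<in> S\<close> \<open>v \<in> S\<close> \<open>a = f u\<close> \<open>b = f v\<close> by blast
      qed
      moreover have "card (f ` S) = card S" using card_image[OF inj_on_subset[OF inj SV]] .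
      ultimately show "n \<in> {card S' | S'. is_clique (f ` V) E2 S'}" using S(2) by force
    qed
    show "{card S' | S'. is_clique (f ` V) E2 S'} \<subseteq> {card S | S. is_clique V E S}"
    proof
      fix n assume "n \<in> {card S' | S'. is_clique (f ` V) E2 S'}"
      then obtain S' where S': "is_clique (f ` V) E2 S'" "n = card S'" by blast
      define S where "S = V \<inter> f -` S'"
      have SV: "S \<subseteq> V" unfolding S_def by blast
      have fS: "f ` S = S'" using S'(1) unfolding S_def is_clique_def by blast
      have "is_clique V E S"
        unfolding is_clique_def
      proof (intro conjI ballI impI)
        show "S \<subseteq> V" by (rule SV)
        fix u v assume "u \<in> S" "v \<in> S" "u \<noteq> v"
        then have "f u \<noteq> f v" using inj SV unfolding inj_on_def by blast
        moreover have "f u \<in> S'" "f v \<in> S'" using \<open>u \<in> S\<close> \<open>v \<in> S\<close> unfolding S_def by auto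
        ultimately have "{f u, f v} \<in> E2" using S'(1) unfolding is_clique_def by blast
        then show "{u, v} \<in> E" using adj SV \<open>u \<in> S\<close> \<open>v \<in> S\<close> by blast
      qed
      moreover have "card S = card S'" using card_image[OF inj_on_subset[OF inj SV]] fS by simp
      ultimately show "n \<in> {card S | S. is_clique V E S}" using S'(2) by force
    qed
  qed
  then show "clique_number (f ` V) E2 = clique_number V E" unfolding clique_number_def by simp
next
  have "colorable (f ` V) E2 k \<longleftrightarrow> colorable V E k" for k
  proof
    assume "colorable (f ` V) E2 k"
    then obtain g where g: "g ` f ` V \<subseteq> {..<k}" "\<forall>u\<in>f ` V. \<forall>v\<in>f ` V. {u, v} \<in> E2 \<longrightarrow> g u \<noteq> g v"
      unfolding colorable_def by blast
    have "(g \<circ> f) ` V \<subseteq> {..<k}" using g(1) by (simp add: image_comp)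
    moreover have "\<forall>u\<in>V. \<forall>v\<in>V. {u, v} \<in> E \<longrightarrow> (g \<circ> f) u \<noteq> (g \<circ> f) v"
    proof (intro ballI impI)
      fix u v assume "u \<in> V" "v \<in> V" "{u, v} \<in> E"
      then have "{f u, f v} \<in> E2" using adj by blast
      then show "(g \<circ> f) u \<noteq> (g \<circ> f) v" using g(2) \<open>u \<in> V\<close> \<open>v \<in> V\<close> by simp
    qed
    ultimately show "colorable V E k" unfolding colorable_def by blast
  next
    assume "colorable V E k"
    then obtain g where g: "g ` V \<subseteq> {..<k}" "\<forall>u\<in>V. \<forall>v\<in>V. {u, v} \<in> E \<longrightarrow> g u \<noteq> g v"
      unfolding colorable_def by blast
    let ?h = "g \<circ> inv_into V f"
    have hf: "?h (f u) = g u" if "u \<in> V" for u using inv_into_f_f[OF inj that] by simp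
    have "?h ` f ` V \<subseteq> {..<k}" using g(1) hf by auto
    moreover have "\<forall>a\<in>f ` V. \<forall>b\<in>f ` V. {a, b} \<in> E2 \<longrightarrow> ?h a \<noteq> ?h b"
    proof (intro ballI impI)
      fix a b assume "a \<in> f ` V" "b \<in> f ` V" "{a, b} \<in> E2"
      then obtain u v where "u \<in> V" "v \<in> V" "a = f u" "b = f v" by blast
      then have "{u, v} \<in> E" using adj \<open>{a, b} \<in> E2\<close> by blast
      then show "?h a \<noteq> ?h b" using hf g(2) \<open>u \<in> V\<close> \<open>v \<in> V\<close> \<open>a = f u\<close> \<open>b = f v\<close> by simp
    qed
    ultimately show "colorable (f ` V) E2 k" unfolding colorable_def by blast
  qed
  then have "colorable (f ` V) E2 = colorable V E" by (rule ext)
  then show "chromatic_number (f ` V) E2 = chromatic_number V E"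
    unfolding chromatic_number_def by simp
qed

lemma perfect_iso:
  assumes inj: "inj_on f V" and g1: "graph V E" and g2: "graph (f ` V) E2"
    and adj: "\<And>u v. u \<in> V \<Longrightarrow> v \<in> V \<Longrightarrow> {f u, f v} \<in> E2 \<longleftrightarrow> {u, v} \<in> E"
    and p: "perfect V E"
  shows "perfect (f ` V) E2"
  unfolding perfect_def
proof (intro allI impI)
  fix S' assume "S' \<subseteq> f ` V"
  define S where "S = V \<inter> f -` S'"
  have SV: "S \<subseteq> V" unfolding S_def by blast
  have fS: "f ` S = S'" using \<open>S' \<subseteq> f ` V\<close> unfolding S_def by blast
  have i: "clique_number (f ` S) (induced_edges E2 (f ` S)) = clique_number S (induced_edges E S) \<and>
    chromatic_number (f ` S) (induced_edges E2 (f ` S)) = chromatic_number S (induced_edges E S)"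
  proof (rule iso_graph)
    show "inj_on f S" using inj_on_subset[OF inj SV] .
    show "graph S (induced_edges E S)" using graph_induced[OF g1 SV] .
    show "graph (f ` S) (induced_edges E2 (f ` S))" using graph_induced[OF g2 image_mono[OF SV]] .
    fix u v assume "u \<in> S" "v \<in> S"
    then show "{f u, f v} \<in> induced_edges E2 (f ` S) \<longleftrightarrow> {u, v} \<in> induced_edges E S"
      using adj SV by (auto simp: induced_mem)
  qed
  have "clique_number S (induced_edges E S) = chromatic_number S (induced_edges E S)"
    using p SV unfolding perfect_def by simp
  then show "clique_number S' (induced_edges E2 S') = chromatic_number S' (induced_edges E2 S')"
    using i fS by simp
qed



lemma colorable_mono: "colorable V E k \<Longrightarrow> k \<le> m \<Longrightarrow> colorable V E m"
  unfolding colorable_def by (meson lessThan_subset_iff order_trans)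

lemma clique_edge: "is_clique V E Q \<Longrightarrow> u \<in> Q \<Longrightarrow> v \<in> Q \<Longrightarrow> u \<noteq> v \<Longrightarrow> {u, v} \<in> E"
  unfolding is_clique_def by blast

lemma clique_sub: "is_clique V E Q \<Longrightarrow> Q \<subseteq> V"
  unfolding is_clique_def by blast

lemma replicate_core:
  assumes g: "graph V E" and p: "perfect V E" and x: "x \<in> V" and y: "y \<notin> V"
    and g': "graph (insert y V) E'"
    and a1: "\<And>u v. u \<in> V \<Longrightarrow> v \<in> V \<Longrightarrow> {u, v} \<in> E' \<longleftrightarrow> {u, v} \<in> E"
    and a2: "\<And>v. v \<in> V \<Longrightarrow> {y, v} \<in> E' \<longleftrightarrow> (v = x \<or> {x, v} \<in> E)"
  shows "chromatic_number (insert y V) E' \<le> clique_number (insert y V) E'"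
proof -
  have fin: "finite V" using g unfolding graph_def by blast
  have fin': "finite (insert y V)" using fin by simp
  define w where "w = clique_number V E"
  have chiw: "chromatic_number V E = w" using perfect_eq[OF p g] w_def by simp
  obtain f where f: "f ` V \<subseteq> {..<w}" "\<forall>u\<in>V. \<forall>v\<in>V. {u, v} \<in> E \<longrightarrow> f u \<noteq> f v"
    using chi_colorable[OF g] chiw unfolding colorable_def by auto
  have clq: "is_clique (insert y V) E' Q" if "is_clique V E Q" for Q
  proof -
    have QV: "Q \<subseteq> V" using that unfolding is_clique_def by blast
    show ?thesis unfolding is_clique_def
    proof (intro conjI ballI impI)
      show "Q \<subseteq> insert y V" using QV by blast
      fix u v assume "u \<in> Q" "v \<in> Q" "u \<noteq> v"
      then have "{u, v} \<in> E" using that unfolding is_clique_def by blast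
      moreover have "u \<in> V" "v \<in> V" using \<open>u \<in> Q\<close> \<open>v \<in> Q\<close> QV by auto
      ultimately show "{u, v} \<in> E'" using a1[of u v] by simp
    qed
  qed
  obtain Q0 where Q0: "is_clique V E Q0" "card Q0 = w" using cn_obtain[OF fin] w_def by blast
  have wle: "w \<le> clique_number (insert y V) E'"
    using cn_ge[OF fin' clq[OF Q0(1)]] Q0(2) by simp
  have w1: "1 \<le> w"
  proof -
    have "is_clique V E {x}" using x unfolding is_clique_def by blast
    then show ?thesis using cn_ge[OF fin, of E "{x}"] w_def by simp
  qed
  show ?thesis
  proof (cases "\<exists>Q. is_clique V E Q \<and> card Q = w \<and> x \<in> Q")
    case True
    then obtain Q where Q: "is_clique V E Q" "card Q = w" "x \<in> Q" by blast
    have QV: "Q \<subseteq> V" using Q(1) unfolding is_clique_def by blast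
    have "is_clique (insert y V) E' (insert y Q)"
      unfolding is_clique_def
    proof (intro conjI ballI impI)
      show "insert y Q \<subseteq> insert y V" using QV by blast
      fix u v assume u: "u \<in> insert y Q" and v: "v \<in> insert y Q" and uv: "u \<noteq> v"
      show "{u, v} \<in> E'"
      proof (cases "u = y")
        case True
        then have "v \<in> Q" using v uv by blast
        then have "v \<noteq> x \<Longrightarrow> {x, v} \<in> E" using clique_edge[OF Q(1) Q(3)] by blast
        then have "v = x \<or> {x, v} \<in> E" by blast
        moreover have "v \<in> V" using \<open>v \<in> Q\<close> QV by blast
        ultimately show ?thesis using a2[of v] True by simp
      next
        case False
        note uF = False
        then have "u \<in> Q" using u by blast
        show ?thesis
        proof (cases "v = y")
          case True
          have "u \<noteq> x \<Longrightarrow> {x, u} \<in> E" using clique_edge[OF Q(1) Q(3) \<open>u \<in> Q\<close>] by blast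
          then have "u = x \<or> {x, u} \<in> E" by blast
          moreover have "u \<in> V" using \<open>u \<in> Q\<close> QV by blast
          ultimately have "{y, u} \<in> E'" using a2[of u] by simp
          then show ?thesis using True by (simp add: insert_commute)
        next
          case False
          then have "v \<in> Q" using v by blast
          have "{u, v} \<in> E" using clique_edge[OF Q(1) \<open>u \<in> Q\<close> \<open>v \<in> Q\<close> uv] .
          moreover have "u \<in> V" "v \<in> V" using \<open>u \<in> Q\<close> \<open>v \<in> Q\<close> QV by auto
          ultimately show ?thesis using a1[of u v] by simp
        qed
      qed
    qed
    moreover have "card (insert y Q) = w + 1"
    proof -
      have "y \<notin> Q" using QV y by blast
      then show ?thesis using Q(2) finite_subset[OF QV fin] by simp
    qed
    ultimately have c1: "w + 1 \<le> clique_number (insert y V) E'"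
      using cn_ge[OF fin'] by metis
    let ?h = "f(y := w)"
    have "colorable (insert y V) E' (w + 1)"
      unfolding colorable_def
    proof (intro exI conjI ballI impI)
      show "?h ` insert y V \<subseteq> {..<w + 1}" using f(1) y by auto
      fix u v assume u: "u \<in> insert y V" and v: "v \<in> insert y V" and e: "{u, v} \<in> E'"
      have "u \<noteq> v" using graph_mem[OF g' e] by blast
      show "?h u \<noteq> ?h v"
      proof (cases "u = y \<or> v = y")
        case True
        then show ?thesis using \<open>u \<noteq> v\<close> u v f(1) by auto
      next
        case False
        then have "u \<in> V" "v \<in> V" using u v by auto
        then have "{u, v} \<in> E" using a1[of u v] e by simp
        then show ?thesis using False f(2) \<open>u \<in> V\<close> \<open>v \<in> V\<close> by auto
      qed
    qed
    then show ?thesis using chi_le c1 by (meson order_trans)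
  next
    case False
    define A' where "A' = {u\<in>V. f u = f x \<and> u \<noteq> x}"
    define T2 where "T2 = V - A'"
    have T2V: "T2 \<subseteq> V" unfolding T2_def by blast
    have gT2: "graph T2 (induced_edges E T2)" using graph_induced[OF g T2V] .
    have finT2: "finite T2" using finite_subset[OF T2V fin] .
    have cT2: "clique_number T2 (induced_edges E T2) \<le> w - 1"
    proof (rule cn_le[OF finT2])
      fix Q assume Qc: "is_clique T2 (induced_edges E T2) Q"
      have QT: "Q \<subseteq> T2" using Qc unfolding is_clique_def by blast
      have Qc': "is_clique V E Q" using Qc T2V unfolding is_clique_def induced_edges_def by blast
      have "card Q \<le> w" using cn_ge[OF fin Qc'] w_def by simp
      moreover have "card Q \<noteq> w"
      proof
        assume cQ: "card Q = w"
        have QV: "Q \<subseteq> V" using QT T2V by blast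
        have inj: "inj_on f Q"
        proof (rule inj_onI, rule ccontr)
          fix u v assume "u \<in> Q" "v \<in> Q" "f u = f v" "u \<noteq> v"
          then have "{u, v} \<in> E" using Qc' unfolding is_clique_def by blast
          then show False using f(2) QV \<open>u \<in> Q\<close> \<open>v \<in> Q\<close> \<open>f u = f v\<close> by blast
        qed
        have "f ` Q \<subseteq> {..<w}" using f(1) QV by blast
        moreover have "card (f ` Q) = card {..<w}" using card_image[OF inj] cQ by simp
        ultimately have "f ` Q = {..<w}" using card_subset_eq[OF finite_lessThan] by blast
        moreover have "f x \<in> {..<w}" using f(1) x by blast
        ultimately obtain u where "u \<in> Q" "f u = f x" by (metis imageE)
        then have "u = x" using QT QV unfolding T2_def A'_def by blast
        then show False using False Qc' cQ \<open>u \<in> Q\<close> by blast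
      qed
      ultimately show "card Q \<le> w - 1" by simp
    qed
    have "chromatic_number T2 (induced_edges E T2) = clique_number T2 (induced_edges E T2)"
      using p T2V unfolding perfect_def by simp
    then have "colorable T2 (induced_edges E T2) (w - 1)"
      using colorable_mono[OF chi_colorable[OF gT2]] cT2 by simp
    then obtain gc where gc: "gc ` T2 \<subseteq> {..<w - 1}"
      "\<forall>u\<in>T2. \<forall>v\<in>T2. {u, v} \<in> induced_edges E T2 \<longrightarrow> gc u \<noteq> gc v"
      unfolding colorable_def by blast
    define h where "h u = (if u = y \<or> u \<in> A' then w - 1 else gc u)" for u
    have "colorable (insert y V) E' w"
      unfolding colorable_def
    proof (intro exI conjI ballI impI)
      show "h ` insert y V \<subseteq> {..<w}"
      proof
        fix c assume "c \<in> h ` insert y V"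
        then obtain u where u: "u \<in> insert y V" "c = h u" by blast
        show "c \<in> {..<w}"
        proof (cases "u = y \<or> u \<in> A'")
          case True then show ?thesis using u w1 h_def by simp
        next
          case False
          then have "u \<in> T2" using u unfolding T2_def by blast
          then show ?thesis using gc(1) u False h_def by auto
        qed
      qed
      fix u v assume u: "u \<in> insert y V" and v: "v \<in> insert y V" and e: "{u, v} \<in> E'"
      have uv: "u \<noteq> v" using graph_mem[OF g' e] by blast
      have noA: False if "a \<in> A'" "{y, a} \<in> E'" for a
      proof -
        have "a \<in> V" "a \<noteq> x" "f a = f x" using that(1) unfolding A'_def by auto
        then have "{x, a} \<in> E" using a2[of a] that(2) by simp
        then have "f x \<noteq> f a" using f(2) x \<open>a \<in> V\<close> by blast
        then show False using \<open>f a = f x\<close> by simp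
      qed
      show "h u \<noteq> h v"
      proof (cases "u = y \<or> u \<in> A'")
        case su: True
        show ?thesis
        proof (cases "v = y \<or> v \<in> A'")
          case sv: True
          have False
          proof (cases "u = y")
            case True
            then have "v \<in> A'" using sv uv by blast
            then show False using noA e True by blast
          next
            case False
            then have "u \<in> A'" using su by blast
            show False
            proof (cases "v = y")
              case True
              then have "{y, u} \<in> E'" using e by (simp add: insert_commute)
              then show False using noA \<open>u \<in> A'\<close> by blast
            next
              case False
              then have "v \<in> A'" using sv by blast
              have "u \<in> V" "v \<in> V" "f u = f x" "f v = f x" using \<open>u \<in> A'\<close> \<open>v \<in> A'\<close> unfolding A'_def by auto
              then have "{u, v} \<in> E" using a1[of u v] e by simp
              then have "f u \<noteq> f v" using f(2) \<open>u \<in> V\<close> \<open>v \<in> V\<close> by blast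
              then show False using \<open>f u = f x\<close> \<open>f v = f x\<close> by simp
            qed
          qed
          then show ?thesis ..
        next
          case sv: False
          then have "v \<in> T2" using v unfolding T2_def by blast
          then show ?thesis using gc(1) su sv h_def by auto
        qed
      next
        case su: False
        then have uT: "u \<in> T2" using u unfolding T2_def by blast
        show ?thesis
        proof (cases "v = y \<or> v \<in> A'")
          case sv: True
          then show ?thesis using gc(1) su sv uT h_def by auto
        next
          case sv: False
          then have vT: "v \<in> T2" using v unfolding T2_def by blast
          have "u \<in> V" "v \<in> V" using uT vT T2V by auto
          then have "{u, v} \<in> E" using a1[of u v] e by simp
          then have "{u, v} \<in> induced_edges E T2" using uT vT by (simp add: induced_mem)
          then show ?thesis using gc(2) uT vT su sv h_def by auto
        qed
      qed
    qed
    then show ?thesis using chi_le wle by (meson order_trans)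
  qed
qed



lemma replicate:
  assumes g: "graph V E" and p: "perfect V E" and x: "x \<in> V" and y: "y \<notin> V"
    and g': "graph (insert y V) E'"
    and a1: "\<And>u v. u \<in> V \<Longrightarrow> v \<in> V \<Longrightarrow> {u, v} \<in> E' \<longleftrightarrow> {u, v} \<in> E"
    and a2: "\<And>v. v \<in> V \<Longrightarrow> {y, v} \<in> E' \<longleftrightarrow> (v = x \<or> {x, v} \<in> E)"
  shows "perfect (insert y V) E'"
  unfolding perfect_def
proof (intro allI impI)
  fix S assume S: "S \<subseteq> insert y V"
  let ?ES = "induced_edges E' S"
  have gS: "graph S ?ES" using graph_induced[OF g' S] .
  show "clique_number S ?ES = chromatic_number S ?ES"
  proof (cases "y \<in> S")
    case False
    then have SV: "S \<subseteq> V" using S by blast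
    have "?ES = induced_edges E S"
    proof (rule graph_eq[OF gS graph_induced[OF g SV]])
      fix u v assume "u \<in> S" "v \<in> S"
      then show "{u, v} \<in> ?ES \<longleftrightarrow> {u, v} \<in> induced_edges E S"
        using a1[of u v] SV by (auto simp: induced_mem)
    qed
    then show ?thesis using p SV unfolding perfect_def by simp
  next
    case yS: True
    show ?thesis
    proof (cases "x \<in> S")
      case False
      define T where "T = insert x (S - {y})"
      have TV: "T \<subseteq> V" using S x unfolding T_def by blast
      define h where "h u = (if u = y then x else u)" for u
      have hS: "h ` S = T" unfolding T_def h_def using yS False by auto
      have inj: "inj_on h S" unfolding inj_on_def h_def using False by auto
      have gT: "graph (h ` S) (induced_edges E T)" using graph_induced[OF g TV] hS by simp
      have iso: "clique_number (h ` S) (induced_edges E T) = clique_number S ?ES \<and>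
          chromatic_number (h ` S) (induced_edges E T) = chromatic_number S ?ES"
      proof (rule iso_graph[OF inj gS gT])
        fix u v assume u: "u \<in> S" and v: "v \<in> S"
        have hT: "h u \<in> T" "h v \<in> T" using hS u v by auto
        show "{h u, h v} \<in> induced_edges E T \<longleftrightarrow> {u, v} \<in> ?ES"
        proof (cases "u = y")
          case True
          note uy = True
          show ?thesis
          proof (cases "v = y")
            case True
            have "{x} \<notin> E" using graph_noloop[OF g] .
            moreover have "{y} \<notin> E'" using graph_noloop[OF g'] .
            ultimately show ?thesis using uy True h_def by (simp add: induced_edges_def)
          next
            case False
            then have vV: "v \<in> V" "v \<noteq> x" using v S \<open>x \<notin> S\<close> by auto
            have "{h u, h v} = {x, v}" using uy False h_def by simp
            moreover have "x \<in> T" "v \<in> T" using v False unfolding T_def by auto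
            ultimately show ?thesis using a2[OF vV(1)] vV(2) u v uy by (simp add: induced_mem)
          qed
        next
          case False
          note uy = False
          then have uV: "u \<in> V" using u S by blast
          show ?thesis
          proof (cases "v = y")
            case True
            have "u \<noteq> x" using u \<open>x \<notin> S\<close> by blast
            have "{h u, h v} = {x, u}" using uy True h_def by (simp add: insert_commute)
            moreover have "{u, v} = {y, u}" using True by (simp add: insert_commute)
            moreover have "x \<in> T" "u \<in> T" using u uy unfolding T_def by auto
            ultimately show ?thesis using a2[OF uV] \<open>u \<noteq> x\<close> u v yS by (simp add: induced_mem)
          next
            case False
            then have vV: "v \<in> V" using v S by blast
            have "{h u, h v} = {u, v}" using uy False h_def by simp
            moreover have "u \<in> T" "v \<in> T" using u v uy False unfolding T_def by auto
            ultimately show ?thesis using a1[OF uV vV] u v by (simp add: induced_mem)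
          qed
        qed
      qed
      have "clique_number T (induced_edges E T) = chromatic_number T (induced_edges E T)"
        using p TV unfolding perfect_def by simp
      then show ?thesis using iso hS by simp
    next
      case xS: True
      define T where "T = S - {y}"
      have TV: "T \<subseteq> V" using S unfolding T_def by blast
      have ST: "S = insert y T" using yS unfolding T_def by blast
      have yT: "y \<notin> T" unfolding T_def by blast
      have xT: "x \<in> T" using xS y x unfolding T_def by blast
      have "chromatic_number (insert y T) ?ES \<le> clique_number (insert y T) ?ES"
      proof (rule replicate_core[OF graph_induced[OF g TV] perfect_induced[OF p TV] xT yT])
        show "graph (insert y T) ?ES" using gS ST by simp
        fix u v assume "u \<in> T" "v \<in> T"
        then show "{u, v} \<in> ?ES \<longleftrightarrow> {u, v} \<in> induced_edges E T"
          using a1[of u v] TV ST by (auto simp: induced_mem)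
      next
        fix v assume "v \<in> T"
        then show "{y, v} \<in> ?ES \<longleftrightarrow> (v = x \<or> {x, v} \<in> induced_edges E T)"
          using a2[of v] TV ST xT yS by (auto simp: induced_mem)
      qed
      then have "chromatic_number S ?ES \<le> clique_number S ?ES" using ST by simp
      then show ?thesis using cn_le_chi[OF gS] by simp
    qed
  qed
qed



definition Vm :: "'a set \<Rightarrow> ('a \<Rightarrow> nat) \<Rightarrow> ('a \<times> nat) set" where
  "Vm V m = Sigma V (\<lambda>x. {..<m x})"

definition Em :: "'a set \<Rightarrow> 'a set set \<Rightarrow> ('a \<Rightarrow> nat) \<Rightarrow> ('a \<times> nat) set set" where
  "Em V E m = {{p, q} | p q. p \<in> Vm V m \<and> q \<in> Vm V m \<and> p \<noteq> q \<and> (fst p = fst q \<or> {fst p, fst q} \<in> E)}"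

lemma Vm_mem: "(a, i) \<in> Vm V m \<longleftrightarrow> a \<in> V \<and> i < m a"
  unfolding Vm_def by simp

lemma Vm_fin: "finite V \<Longrightarrow> finite (Vm V m)"
  unfolding Vm_def by simp

lemma graph_Em: "finite V \<Longrightarrow> graph (Vm V m) (Em V E m)"
  unfolding graph_def Em_def using Vm_fin by blast

lemma Em_mem:
  assumes "p \<in> Vm V m" "q \<in> Vm V m"
  shows "{p, q} \<in> Em V E m \<longleftrightarrow> p \<noteq> q \<and> (fst p = fst q \<or> {fst p, fst q} \<in> E)"
proof
  assume "{p, q} \<in> Em V E m"
  then obtain p' q' where pq: "{p, q} = {p', q'}" "p' \<noteq> q'" "fst p' = fst q' \<or> {fst p', fst q'} \<in> E"
    unfolding Em_def by blast
  from pq(1) have "(p = p' \<and> q = q') \<or> (p = q' \<and> q = p')" by (simp add: doubleton_eq_iff)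
  then show "p \<noteq> q \<and> (fst p = fst q \<or> {fst p, fst q} \<in> E)"
  proof
    assume "p = p' \<and> q = q'" then show ?thesis using pq by simp
  next
    assume "p = q' \<and> q = p'" then show ?thesis using pq by (auto simp: insert_commute)
  qed
next
  assume "p \<noteq> q \<and> (fst p = fst q \<or> {fst p, fst q} \<in> E)"
  then show "{p, q} \<in> Em V E m" using assms unfolding Em_def by blast
qed

lemma perfect_Em_pos:
  assumes g: "graph V E" and p: "perfect V E"
  shows "(\<forall>x\<in>V. 1 \<le> m x) \<Longrightarrow> perfect (Vm V m) (Em V E m)"
proof (induction "\<Sum>x\<in>V. m x" arbitrary: m rule: less_induct)
  case less
  have fin: "finite V" using g unfolding graph_def by blast
  show ?case
  proof (cases "\<forall>x\<in>V. m x = 1")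
    case True
    define f where "f x = (x, 0::nat)" for x :: 'a
    have VmE: "Vm V m = f ` V"
    proof
      show "Vm V m \<subseteq> f ` V"
      proof
        fix p assume "p \<in> Vm V m"
        then obtain a i where "p = (a, i)" "a \<in> V" "i < m a" unfolding Vm_def by blast
        then show "p \<in> f ` V" using True f_def by auto
      qed
      show "f ` V \<subseteq> Vm V m" using True f_def Vm_mem by fastforce
    qed
    have inj: "inj_on f V" unfolding inj_on_def f_def by simp
    have gf: "graph (f ` V) (Em V E m)" using graph_Em[OF fin, of m E] VmE by simp
    show ?thesis unfolding VmE
    proof (rule perfect_iso[OF inj g gf _ p])
      fix u v assume u: "u \<in> V" and v: "v \<in> V"
      have "f u \<in> Vm V m" "f v \<in> Vm V m" using VmE u v by auto
      then have "{f u, f v} \<in> Em V E m \<longleftrightarrow> f u \<noteq> f v \<and> (u = v \<or> {u, v} \<in> E)"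
        using Em_mem[of "f u" V m "f v" E] f_def by simp
      also have "\<dots> \<longleftrightarrow> {u, v} \<in> E"
        using graph_mem[OF g, of u v] graph_noloop[OF g, of u] f_def by auto
      finally show "{f u, f v} \<in> Em V E m \<longleftrightarrow> {u, v} \<in> E" .
    qed
  next
    case False
    then obtain x where x: "x \<in> V" "m x \<noteq> 1" by blast
    then have mx: "2 \<le> m x" using less.prems x by fastforce
    define m' where "m' = m(x := m x - 1)"
    have pos': "\<forall>x\<in>V. 1 \<le> m' x" using less.prems mx unfolding m'_def by auto
    have "(\<Sum>y\<in>V. m' y) = m' x + (\<Sum>y\<in>V - {x}. m' y)" using sum.remove[OF fin x(1)] .
    moreover have "(\<Sum>y\<in>V. m y) = m x + (\<Sum>y\<in>V - {x}. m y)" using sum.remove[OF fin x(1)] .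
    moreover have "(\<Sum>y\<in>V - {x}. m' y) = (\<Sum>y\<in>V - {x}. m y)" unfolding m'_def by (rule sum.cong) auto
    ultimately have lt: "(\<Sum>y\<in>V. m' y) < (\<Sum>y\<in>V. m y)" using mx unfolding m'_def by simp
    have IH: "perfect (Vm V m') (Em V E m')" using less.hyps[OF lt pos'] .
    define y where "y = (x, m x - 1)"
    have VmI: "Vm V m = insert y (Vm V m')"
      unfolding y_def Vm_def m'_def using x mx by (auto split: if_splits)
    have yn: "y \<notin> Vm V m'" unfolding y_def Vm_def m'_def by simp
    have x0: "(x, 0) \<in> Vm V m'" using x pos' Vm_mem by fastforce
    have sub: "Vm V m' \<subseteq> Vm V m" using VmI by blast
    have yin: "y \<in> Vm V m" using VmI by blast
    have "perfect (insert y (Vm V m')) (Em V E m)"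
    proof (rule replicate[OF graph_Em[OF fin] IH x0 yn])
      show "graph (insert y (Vm V m')) (Em V E m)" using graph_Em[OF fin, of m E] VmI by simp
      fix u v assume u: "u \<in> Vm V m'" and v: "v \<in> Vm V m'"
      show "{u, v} \<in> Em V E m \<longleftrightarrow> {u, v} \<in> Em V E m'"
        using Em_mem[OF u v] Em_mem[OF subsetD[OF sub u] subsetD[OF sub v]] by simp
    next
      fix v assume v: "v \<in> Vm V m'"
      have "{y, v} \<in> Em V E m \<longleftrightarrow> y \<noteq> v \<and> (fst y = fst v \<or> {fst y, fst v} \<in> E)"
        using Em_mem[OF yin subsetD[OF sub v]] .
      also have "\<dots> \<longleftrightarrow> (x = fst v \<or> {x, fst v} \<in> E)" using yn v y_def by auto
      also have "\<dots> \<longleftrightarrow> (v = (x, 0) \<or> {(x, 0), v} \<in> Em V E m')"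
        using Em_mem[OF x0 v] by auto
      finally show "{y, v} \<in> Em V E m \<longleftrightarrow> (v = (x, 0) \<or> {(x, 0), v} \<in> Em V E m')" .
    qed
    then show ?thesis using VmI by simp
  qed
qed

lemma perfect_Em:
  assumes g: "graph V E" and p: "perfect V E"
  shows "perfect (Vm V m) (Em V E m)"
proof -
  have fin: "finite V" using g unfolding graph_def by blast
  define m1 where "m1 x = max 1 (m x)" for x
  have p1: "perfect (Vm V m1) (Em V E m1)" using perfect_Em_pos[OF g p] unfolding m1_def by simp
  have sub: "Vm V m \<subseteq> Vm V m1" unfolding Vm_def m1_def by auto
  show ?thesis
  proof (rule perfect_sub[OF p1 graph_Em[OF fin] sub graph_Em[OF fin]])
    fix u v assume u: "u \<in> Vm V m" and v: "v \<in> Vm V m"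
    show "{u, v} \<in> Em V E m \<longleftrightarrow> {u, v} \<in> Em V E m1"
      using Em_mem[OF u v] Em_mem[OF subsetD[OF sub u] subsetD[OF sub v]] by simp
  qed
qed



lemma double_count:
  assumes "finite X" "finite K"
  shows "(\<Sum>x\<in>X. card {k\<in>K. x \<in> g k}) = (\<Sum>k\<in>K. card (X \<inter> g k))"
proof -
  have "(\<Sum>x\<in>X. card {k\<in>K. x \<in> g k}) = (\<Sum>x\<in>X. \<Sum>k\<in>K. if x \<in> g k then 1 else 0)"
    using assms(2) by (simp add: sum.inter_filter[symmetric])
  also have "\<dots> = (\<Sum>k\<in>K. \<Sum>x\<in>X. if x \<in> g k then 1 else 0)" by (rule sum.swap)
  also have "\<dots> = (\<Sum>k\<in>K. card (X \<inter> g k))"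
  proof (rule sum.cong[OF refl])
    fix k
    have "X \<inter> g k = {x\<in>X. x \<in> g k}" by blast
    then show "(\<Sum>x\<in>X. if x \<in> g k then 1 else 0) = card (X \<inter> g k)"
      using assms(1) by (simp add: sum.inter_filter[symmetric])
  qed
  finally show ?thesis .
qed

lemma clique_indep_inter:
  assumes "finite V" "is_clique V E K" "is_independent V E A"
  shows "card (K \<inter> A) \<le> 1"
proof -
  have fin: "finite (K \<inter> A)" using assms(1,2) clique_sub finite_subset by (metis inf.coboundedI1)
  have "\<forall>a\<in>K \<inter> A. \<forall>b\<in>K \<inter> A. a = b"
  proof (intro ballI, rule ccontr)
    fix a b assume a: "a \<in> K \<inter> A" and b: "b \<in> K \<inter> A" and ab: "a \<noteq> b"
    have "{a, b} \<in> E" using clique_edge[OF assms(2)] a b ab by blast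
    moreover have "{a, b} \<notin> E" using assms(3) a b unfolding is_independent_def by blast
    ultimately show False by blast
  qed
  then show ?thesis using card_le_Suc0_iff_eq[OF fin] by simp
qed

lemma key_clique:
  assumes g: "graph V E" and p: "perfect V E" and ne: "V \<noteq> {}"
  shows "\<exists>K. is_clique V E K \<and>
    (\<forall>A. is_independent V E A \<and> card A = independence_number V E \<longrightarrow> A \<inter> K \<noteq> {})"
proof (rule ccontr)
  define \<alpha> where "\<alpha> = independence_number V E"
  assume "\<not> ?thesis"
  then have H: "\<And>K. is_clique V E K \<Longrightarrow> \<exists>A. is_independent V E A \<and> card A = \<alpha> \<and> A \<inter> K = {}"
    unfolding \<alpha>_def by blast
  have fin: "finite V" using g unfolding graph_def by blast
  obtain v where v: "v \<in> V" using ne by blast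
  have "is_independent V E {v}" using v graph_noloop[OF g, of v] unfolding is_independent_def by simp
  then have a1: "1 \<le> \<alpha>" using in_ge[OF fin] \<alpha>_def by fastforce
  define KK where "KK = {K. is_clique V E K}"
  have finKK: "finite KK"
  proof -
    have "KK \<subseteq> Pow V" unfolding KK_def using clique_sub by blast
    then show ?thesis using fin finite_subset by blast
  qed
  define N where "N = card KK"
  have eKK: "{} \<in> KK" unfolding KK_def is_clique_def by simp
  then have N1: "1 \<le> N" unfolding N_def using finKK card_0_eq by fastforce
  define Af where "Af K = (SOME A. is_independent V E A \<and> card A = \<alpha> \<and> A \<inter> K = {})" for K
  have AfP: "is_independent V E (Af K) \<and> card (Af K) = \<alpha> \<and> Af K \<inter> K = {}" if "K \<in> KK" for K
  proof -
    have "is_clique V E K" using that unfolding KK_def by blast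
    then have "\<exists>A. is_independent V E A \<and> card A = \<alpha> \<and> A \<inter> K = {}" by (rule H)
    then show ?thesis unfolding Af_def by (rule someI_ex)
  qed
  define k where "k x = card {K\<in>KK. x \<in> Af K}" for x
  define V' where "V' = Vm V k"
  define E' where "E' = Em V E k"
  have g': "graph V' E'" unfolding V'_def E'_def using graph_Em[OF fin] .
  have p': "perfect V' E'" unfolding V'_def E'_def using perfect_Em[OF g p] .
  have fin': "finite V'" using g' unfolding graph_def by blast
  have cl: "card Q \<le> N - 1" if Q: "is_clique V' E' Q" for Q
  proof -
    define K0 where "K0 = fst ` Q"
    have QV: "Q \<subseteq> V'" using clique_sub[OF Q] .
    have K0V: "K0 \<subseteq> V" unfolding K0_def using QV unfolding V'_def Vm_def by auto
    have K0c: "is_clique V E K0" unfolding is_clique_def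
    proof (intro conjI ballI impI)
      show "K0 \<subseteq> V" by (rule K0V)
      fix a b assume "a \<in> K0" "b \<in> K0" "a \<noteq> b"
      then obtain p q where pq: "p \<in> Q" "q \<in> Q" "a = fst p" "b = fst q" unfolding K0_def by blast
      then have "p \<noteq> q" using \<open>a \<noteq> b\<close> by blast
      then have "{p, q} \<in> E'" using clique_edge[OF Q pq(1,2)] by blast
      then have "fst p = fst q \<or> {fst p, fst q} \<in> E"
        using Em_mem[of p V k q E] pq QV unfolding E'_def V'_def by blast
      then show "{a, b} \<in> E" using pq \<open>a \<noteq> b\<close> by blast
    qed
    have finK0: "finite K0" using finite_subset[OF K0V fin] .
    have "Q \<subseteq> Sigma K0 (\<lambda>x. {..<k x})"
    proof
      fix r assume "r \<in> Q"
      then have "fst r \<in> K0" "snd r < k (fst r)" using QV unfolding K0_def V'_def Vm_def by auto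
      then show "r \<in> Sigma K0 (\<lambda>x. {..<k x})" by (cases r) auto
    qed
    then have "card Q \<le> card (Sigma K0 (\<lambda>x. {..<k x}))"
      by (rule card_mono[rotated]) (simp add: finK0)
    also have "\<dots> = (\<Sum>x\<in>K0. k x)" using card_SigmaI[OF finK0, of "\<lambda>x. {..<k x}"] by simp
    also have "\<dots> = (\<Sum>K\<in>KK. card (K0 \<inter> Af K))"
      unfolding k_def using double_count[OF finK0 finKK] .
    also have "\<dots> = card (K0 \<inter> Af K0) + (\<Sum>K\<in>KK - {K0}. card (K0 \<inter> Af K))"
      using sum.remove[OF finKK] K0c unfolding KK_def by blast
    also have "\<dots> \<le> 0 + (\<Sum>K\<in>KK - {K0}. 1)"
    proof (rule add_mono)
      have "K0 \<in> KK" using K0c unfolding KK_def by blast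
      then show "card (K0 \<inter> Af K0) \<le> 0" using AfP by (simp add: Int_commute)
      show "(\<Sum>K\<in>KK - {K0}. card (K0 \<inter> Af K)) \<le> (\<Sum>K\<in>KK - {K0}. 1)"
      proof (rule sum_mono)
        fix K assume "K \<in> KK - {K0}"
        then show "card (K0 \<inter> Af K) \<le> 1" using clique_indep_inter[OF fin K0c] AfP by blast
      qed
    qed
    also have "\<dots> = N - 1"
    proof -
      have "K0 \<in> KK" using K0c unfolding KK_def by blast
      then show ?thesis unfolding N_def using finKK by simp
    qed
    finally show ?thesis .
  qed
  have ind: "card B \<le> \<alpha>" if B: "is_independent V' E' B" for B
  proof -
    have BV: "B \<subseteq> V'" using B unfolding is_independent_def by blast
    have inj: "inj_on fst B"
    proof (rule inj_onI, rule ccontr)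
      fix p q assume "p \<in> B" "q \<in> B" "fst p = fst q" "p \<noteq> q"
      then have "{p, q} \<in> E'" using Em_mem[of p V k q E] BV unfolding E'_def V'_def by blast
      then show False using B \<open>p \<in> B\<close> \<open>q \<in> B\<close> unfolding is_independent_def by blast
    qed
    have "is_independent V E (fst ` B)" unfolding is_independent_def
    proof (intro conjI ballI)
      show "fst ` B \<subseteq> V" using BV unfolding V'_def Vm_def by auto
      fix a b assume "a \<in> fst ` B" "b \<in> fst ` B"
      then obtain p q where pq: "p \<in> B" "q \<in> B" "a = fst p" "b = fst q" by blast
      show "{a, b} \<notin> E"
      proof
        assume e: "{a, b} \<in> E"
        then have "a \<noteq> b" using graph_mem[OF g] by blast
        then have "p \<noteq> q" using pq by blast
        then have "{p, q} \<in> E'" using Em_mem[of p V k q E] BV pq e unfolding E'_def V'_def by blast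
        then show False using B pq unfolding is_independent_def by blast
      qed
    qed
    then have "card (fst ` B) \<le> \<alpha>" using in_ge[OF fin] \<alpha>_def by simp
    then show ?thesis using card_image[OF inj] by simp
  qed
  have cV': "card V' = N * \<alpha>"
  proof -
    have "card V' = (\<Sum>x\<in>V. k x)" unfolding V'_def Vm_def using card_SigmaI[OF fin, of "\<lambda>x. {..<k x}"] by simp
    also have "\<dots> = (\<Sum>K\<in>KK. card (V \<inter> Af K))" unfolding k_def using double_count[OF fin finKK] .
    also have "\<dots> = (\<Sum>K\<in>KK. \<alpha>)"
    proof (rule sum.cong[OF refl])
      fix K assume "K \<in> KK"
      then have "Af K \<subseteq> V" "card (Af K) = \<alpha>" using AfP unfolding is_independent_def by auto
      then show "card (V \<inter> Af K) = \<alpha>" by (simp add: Int_absorb1)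
    qed
    finally show ?thesis unfolding N_def by simp
  qed
  have "card V' \<le> chromatic_number V' E' * \<alpha>"
    using color_indep_bound[OF g' chi_colorable[OF g'] ind] .
  moreover have "chromatic_number V' E' \<le> N - 1"
    using perfect_eq[OF p' g'] cn_le[OF fin' cl] by simp
  ultimately have "N * \<alpha> \<le> (N - 1) * \<alpha>" using cV' mult_le_mono1 by (metis le_trans)
  then show False using a1 N1 by simp
qed



lemma clique_cover:
  "graph V E \<Longrightarrow> perfect V E \<Longrightarrow> \<exists>c. c ` V \<subseteq> {..<independence_number V E} \<and>
     (\<forall>u\<in>V. \<forall>v\<in>V. u \<noteq> v \<and> c u = c v \<longrightarrow> {u, v} \<in> E)"
proof (induction "card V" arbitrary: V E rule: less_induct)
  case less
  note g = less.prems(1) and p = less.prems(2)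
  show ?case
  proof (cases "V = {}")
    case True
    then show ?thesis by auto
  next
    case False
    have fin: "finite V" using g unfolding graph_def by blast
    define \<alpha> where "\<alpha> = independence_number V E"
    obtain K where K: "is_clique V E K"
      "\<And>A. is_independent V E A \<Longrightarrow> card A = \<alpha> \<Longrightarrow> A \<inter> K \<noteq> {}"
      using key_clique[OF g p False] unfolding \<alpha>_def by blast
    obtain A0 where A0: "is_independent V E A0" "card A0 = \<alpha>" using in_obtain[OF fin] \<alpha>_def by blast
    have "A0 \<inter> K \<noteq> {}" using K(2)[OF A0] .
    then have Kne: "K \<noteq> {}" by blast
    have a1: "1 \<le> \<alpha>"
    proof -
      have "A0 \<noteq> {}" using \<open>A0 \<inter> K \<noteq> {}\<close> by blast
      moreover have "finite A0" using A0(1) fin finite_subset unfolding is_independent_def by blast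
      ultimately have "0 < card A0" using card_gt_0_iff by blast
      then show ?thesis using A0(2) by simp
    qed
    have KV: "K \<subseteq> V" using clique_sub[OF K(1)] .
    define V' where "V' = V - K"
    define E' where "E' = induced_edges E V'"
    have V'V: "V' \<subseteq> V" unfolding V'_def by blast
    have lt: "card V' < card V"
    proof -
      have "V' \<subset> V" unfolding V'_def using KV Kne by blast
      then show ?thesis using psubset_card_mono[OF fin] by blast
    qed
    have g': "graph V' E'" unfolding E'_def using graph_induced[OF g V'V] .
    have p': "perfect V' E'" unfolding E'_def using perfect_induced[OF p V'V] .
    obtain c' where c': "c' ` V' \<subseteq> {..<independence_number V' E'}"
      "\<forall>u\<in>V'. \<forall>v\<in>V'. u \<noteq> v \<and> c' u = c' v \<longrightarrow> {u, v} \<in> E'"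
      using less.hyps[OF lt g' p'] by blast
    have fin': "finite V'" using finite_subset[OF V'V fin] .
    have alt: "independence_number V' E' < \<alpha>"
    proof -
      obtain A' where A': "is_independent V' E' A'" "card A' = independence_number V' E'"
        using in_obtain[OF fin'] by blast
      have A'V: "A' \<subseteq> V'" using A'(1) unfolding is_independent_def by blast
      have Ai: "is_independent V E A'" unfolding is_independent_def
      proof (intro conjI ballI)
        show "A' \<subseteq> V" using A'V V'V by blast
        fix u v assume "u \<in> A'" "v \<in> A'"
        then have "{u, v} \<notin> E'" using A'(1) unfolding is_independent_def by blast
        then show "{u, v} \<notin> E" using A'V \<open>u \<in> A'\<close> \<open>v \<in> A'\<close> unfolding E'_def
          by (auto simp: induced_mem)
      qed
      have "card A' \<le> \<alpha>" using in_ge[OF fin Ai] \<alpha>_def by simp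
      moreover have "card A' \<noteq> \<alpha>"
      proof
        assume "card A' = \<alpha>"
        then have "A' \<inter> K \<noteq> {}" using K(2)[OF Ai] by blast
        then show False using A'V unfolding V'_def by blast
      qed
      ultimately show ?thesis using A'(2) by simp
    qed
    define c where "c u = (if u \<in> K then \<alpha> - 1 else c' u)" for u
    show ?thesis unfolding \<alpha>_def[symmetric]
    proof (intro exI conjI ballI impI)
      show "c ` V \<subseteq> {..<\<alpha>}"
      proof
        fix z assume "z \<in> c ` V"
        then obtain u where u: "u \<in> V" "z = c u" by blast
        show "z \<in> {..<\<alpha>}"
        proof (cases "u \<in> K")
          case True then show ?thesis using u a1 c_def by simp
        next
          case False
          then have "u \<in> V'" using u unfolding V'_def by blast
          then have "c' u < independence_number V' E'" using c'(1) by blast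
          then show ?thesis using u False alt c_def by simp
        qed
      qed
      fix u v assume u: "u \<in> V" and v: "v \<in> V" and uv: "u \<noteq> v \<and> c u = c v"
      show "{u, v} \<in> E"
      proof (cases "u \<in> K")
        case uK: True
        show ?thesis
        proof (cases "v \<in> K")
          case True then show ?thesis using clique_edge[OF K(1) uK] uv by blast
        next
          case False
          then have "v \<in> V'" using v unfolding V'_def by blast
          then have "c' v < independence_number V' E'" using c'(1) by blast
          then have "c v < \<alpha> - 1" using alt False c_def by simp
          then show ?thesis using uv uK c_def by simp
        qed
      next
        case uK: False
        then have uV': "u \<in> V'" using u unfolding V'_def by blast
        then have cu: "c' u < independence_number V' E'" using c'(1) by blast
        show ?thesis
        proof (cases "v \<in> K")
          case True
          then have "c u < \<alpha> - 1" using alt uK cu c_def by simp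
          then show ?thesis using uv True c_def by simp
        next
          case False
          then have vV': "v \<in> V'" using v unfolding V'_def by blast
          have "c' u = c' v" using uv uK False c_def by simp
          then have "{u, v} \<in> E'" using c'(2) uV' vV' uv by blast
          then show ?thesis unfolding E'_def by (simp add: induced_mem)
        qed
      qed
    qed
  qed
qed



lemma pair_cases: "{u, v} = {u', v'} \<Longrightarrow> (u = u' \<and> v = v') \<or> (u = v' \<and> v = u')"
  by (simp add: doubleton_eq_iff)

lemma part_i:
  assumes g: "graph V E" and p: "perfect V E"
  shows "edge_partition_into bipartite V E (nat \<lceil>log 2 (real (clique_number V E))\<rceil>)"
proof -
  define w where "w = clique_number V E"
  define kk where "kk = nat \<lceil>log 2 (real w)\<rceil>"
  obtain f where f: "f ` V \<subseteq> {..<w}" "\<forall>u\<in>V. \<forall>v\<in>V. {u, v} \<in> E \<longrightarrow> f u \<noteq> f v"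
    using chi_colorable[OF g] perfect_eq[OF p g] w_def unfolding colorable_def by auto
  define F where "F i = {e\<in>E. \<exists>u v. e = {u, v} \<and> u \<in> V \<and> v \<in> V \<and> f u \<noteq> f v \<and> fdb (f u) (f v) = i}" for i
  have "(\<forall>i<kk. F i \<subseteq> E \<and> bipartite V (F i)) \<and> (\<Union>i<kk. F i) = E \<and>
      (\<forall>i<kk. \<forall>j<kk. i \<noteq> j \<longrightarrow> F i \<inter> F j = {})"
  proof (intro conjI allI impI)
    fix i assume "i < kk"
    show "F i \<subseteq> E" unfolding F_def by blast
    define col where "col u = (if bit (f u) i then 1 else 0::nat)" for u
    show "bipartite V (F i)" unfolding bipartite_def colorable_def
    proof (intro exI conjI ballI impI)
      show "col ` V \<subseteq> {..<2}" unfolding col_def by auto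
      fix u v assume "u \<in> V" "v \<in> V" "{u, v} \<in> F i"
      then obtain u' v' where uv: "{u, v} = {u', v'}" "f u' \<noteq> f v'" "fdb (f u') (f v') = i"
        unfolding F_def by blast
      have "bit (f u') i \<noteq> bit (f v') i" using fdb_bit[OF uv(2)] uv(3) by simp
      then have "bit (f u) i \<noteq> bit (f v) i" using pair_cases[OF uv(1)] by auto
      then show "col u \<noteq> col v" unfolding col_def by auto
    qed
  next
    show "(\<Union>i<kk. F i) = E"
    proof
      show "(\<Union>i<kk. F i) \<subseteq> E" unfolding F_def by blast
      show "E \<subseteq> (\<Union>i<kk. F i)"
      proof
        fix e assume e: "e \<in> E"
        then obtain u v where uv: "u \<in> V" "v \<in> V" "u \<noteq> v" "e = {u, v}" using graph_edge[OF g] by blast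
        have fne: "f u \<noteq> f v" using f(2) uv e by blast
        have "V \<noteq> {}" using uv by blast
        have "is_clique V E {u}" using uv unfolding is_clique_def by blast
        then have "1 \<le> w" using cn_ge[of V E "{u}"] g w_def unfolding graph_def by simp
        then have w2: "w \<le> 2 ^ kk" unfolding kk_def using log_ceil by blast
        have "f u < 2 ^ kk" "f v < 2 ^ kk" using f(1) uv w2 by fastforce+
        then have "fdb (f u) (f v) < kk" using fdb_less[OF fne] by blast
        moreover have "e \<in> F (fdb (f u) (f v))" unfolding F_def using e uv fne by blast
        ultimately show "e \<in> (\<Union>i<kk. F i)" by blast
      qed
    qed
  next
    fix i j assume "i < kk" "j < kk" "i \<noteq> j"
    show "F i \<inter> F j = {}"
    proof (rule ccontr)
      assume "F i \<inter> F j \<noteq> {}"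
      then obtain e where "e \<in> F i" "e \<in> F j" by blast
      then obtain u v u' v' where "e = {u, v}" "fdb (f u) (f v) = i" "e = {u', v'}" "fdb (f u') (f v') = j"
        unfolding F_def by blast
      then have "i = j" using pair_cases[of u v u' v'] fdb_sym by auto
      then show False using \<open>i \<noteq> j\<close> by simp
    qed
  qed
  then show ?thesis unfolding edge_partition_into_def w_def[symmetric] kk_def[symmetric] by blast
qed

lemma part_ii:
  assumes g: "graph V E" and p: "perfect V E"
  shows "edge_partition_into comparability V E (1 + nat \<lceil>log 2 (real (independence_number V E))\<rceil>)"
proof -
  define \<alpha> where "\<alpha> = independence_number V E"
  define kk where "kk = nat \<lceil>log 2 (real \<alpha>)\<rceil>"
  have fin: "finite V" using g unfolding graph_def by blast
  obtain c where c: "c ` V \<subseteq> {..<\<alpha>}" "\<forall>u\<in>V. \<forall>v\<in>V. u \<noteq> v \<and> c u = c v \<longrightarrow> {u, v} \<in> E"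
    using clique_cover[OF g p] \<alpha>_def by blast
  define F where "F i = (if i = 0 then {e\<in>E. \<exists>u v. e = {u, v} \<and> u \<in> V \<and> v \<in> V \<and> c u = c v}
     else {e\<in>E. \<exists>u v. e = {u, v} \<and> u \<in> V \<and> v \<in> V \<and> c u \<noteq> c v \<and> fdb (c u) (c v) = i - 1})" for i
  obtain h :: "'a \<Rightarrow> nat" where h: "inj_on h V" using fin finite_imp_inj_to_nat_seg by blast
  have "(\<forall>i<1 + kk. F i \<subseteq> E \<and> comparability V (F i)) \<and> (\<Union>i<1 + kk. F i) = E \<and>
      (\<forall>i<1 + kk. \<forall>j<1 + kk. i \<noteq> j \<longrightarrow> F i \<inter> F j = {})"
  proof (intro conjI allI impI)
    fix i assume "i < 1 + kk"
    show "F i \<subseteq> E" unfolding F_def by auto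
    show "comparability V (F i)"
    proof (cases "i = 0")
      case True
      define r where "r u v = (u \<in> V \<and> v \<in> V \<and> c u = c v \<and> h u < h v)" for u v
      show ?thesis unfolding comparability_def
      proof (intro exI conjI allI impI ballI)
        fix u v show "r u v \<Longrightarrow> u \<in> V" "r u v \<Longrightarrow> v \<in> V" unfolding r_def by auto
      next
        fix u show "\<not> r u u" unfolding r_def by simp
      next
        fix u v w show "r u v \<Longrightarrow> r v w \<Longrightarrow> r u w" unfolding r_def by auto
      next
        fix u v assume u: "u \<in> V" and v: "v \<in> V" and uv: "u \<noteq> v"
        have "h u \<noteq> h v" using h u v uv unfolding inj_on_def by blast
        have "{u, v} \<in> F i \<longleftrightarrow> c u = c v"
        proof
          assume "{u, v} \<in> F i"
          then obtain u' v' where "{u, v} = {u', v'}" "c u' = c v'" using True unfolding F_def by auto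
          then show "c u = c v" using pair_cases by metis
        next
          assume "c u = c v"
          then have "{u, v} \<in> E" using c(2) u v uv by blast
          moreover have "F i = {e\<in>E. \<exists>u v. e = {u, v} \<and> u \<in> V \<and> v \<in> V \<and> c u = c v}"
            unfolding F_def using True by simp
          ultimately show "{u, v} \<in> F i" using u v \<open>c u = c v\<close> by blast
        qed
        also have "\<dots> \<longleftrightarrow> r u v \<or> r v u" unfolding r_def using u v \<open>h u \<noteq> h v\<close> by auto
        finally show "{u, v} \<in> F i \<longleftrightarrow> r u v \<or> r v u" .
      qed
    next
      case False
      define b where "b = i - 1"
      define r where "r u v = (u \<in> V \<and> v \<in> V \<and> {u, v} \<in> E \<and> c u \<noteq> c v \<and> fdb (c u) (c v) = b \<and> \<not> bit (c u) b)" for u v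
      have Fi: "F i = {e\<in>E. \<exists>u v. e = {u, v} \<and> u \<in> V \<and> v \<in> V \<and> c u \<noteq> c v \<and> fdb (c u) (c v) = b}"
        unfolding F_def b_def using False by simp
      show ?thesis unfolding comparability_def
      proof (intro exI conjI allI impI ballI)
        fix u v show "r u v \<Longrightarrow> u \<in> V" "r u v \<Longrightarrow> v \<in> V" unfolding r_def by auto
      next
        fix u show "\<not> r u u" unfolding r_def by simp
      next
        fix u v w assume ruv: "r u v" and rvw: "r v w"
        have "bit (c u) b \<noteq> bit (c v) b" using ruv fdb_bit[of "c u" "c v"] unfolding r_def by auto
        then have "bit (c v) b" using ruv unfolding r_def by auto
        then show "r u w" using rvw unfolding r_def by auto
      next
        fix u v assume u: "u \<in> V" and v: "v \<in> V" and uv: "u \<noteq> v"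
        have "{u, v} \<in> F i \<longleftrightarrow> {u, v} \<in> E \<and> c u \<noteq> c v \<and> fdb (c u) (c v) = b"
        proof
          assume "{u, v} \<in> F i"
          then obtain u' v' where "{u, v} \<in> E" "{u, v} = {u', v'}" "c u' \<noteq> c v'" "fdb (c u') (c v') = b"
            unfolding Fi by blast
          then show "{u, v} \<in> E \<and> c u \<noteq> c v \<and> fdb (c u) (c v) = b"
            using pair_cases[of u v u' v'] fdb_sym by auto
        next
          assume "{u, v} \<in> E \<and> c u \<noteq> c v \<and> fdb (c u) (c v) = b"
          then show "{u, v} \<in> F i" unfolding Fi using u v by blast
        qed
        also have "\<dots> \<longleftrightarrow> r u v \<or> r v u"
        proof
          assume A: "{u, v} \<in> E \<and> c u \<noteq> c v \<and> fdb (c u) (c v) = b"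
          then have "bit (c u) b \<noteq> bit (c v) b" using fdb_bit[of "c u" "c v"] by auto
          moreover have "{v, u} \<in> E" using A by (simp add: insert_commute)
          ultimately show "r u v \<or> r v u" using A u v fdb_sym[of "c u" "c v"] unfolding r_def by auto
        next
          assume "r u v \<or> r v u"
          then show "{u, v} \<in> E \<and> c u \<noteq> c v \<and> fdb (c u) (c v) = b"
            unfolding r_def using fdb_sym[of "c u" "c v"] by (auto simp: insert_commute)
        qed
        finally show "{u, v} \<in> F i \<longleftrightarrow> r u v \<or> r v u" .
      qed
    qed
  next
    show "(\<Union>i<1 + kk. F i) = E"
    proof
      show "(\<Union>i<1 + kk. F i) \<subseteq> E" unfolding F_def by auto
      show "E \<subseteq> (\<Union>i<1 + kk. F i)"
      proof
        fix e assume e: "e \<in> E"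
        then obtain u v where uv: "u \<in> V" "v \<in> V" "u \<noteq> v" "e = {u, v}" using graph_edge[OF g] by blast
        show "e \<in> (\<Union>i<1 + kk. F i)"
        proof (cases "c u = c v")
          case True
          then have "e \<in> F 0" unfolding F_def using e uv by auto
          then show ?thesis by blast
        next
          case False
          have "is_independent V E {u}" using uv graph_noloop[OF g, of u] unfolding is_independent_def by simp
          then have "1 \<le> \<alpha>" using in_ge[OF fin] \<alpha>_def by fastforce
          then have w2: "\<alpha> \<le> 2 ^ kk" unfolding kk_def using log_ceil by blast
          have "c u < 2 ^ kk" "c v < 2 ^ kk" using c(1) uv w2 by fastforce+
          then have lt: "fdb (c u) (c v) < kk" using fdb_less[OF False] by blast
          have "e \<in> F (Suc (fdb (c u) (c v)))" unfolding F_def using e uv False by auto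
          moreover have "Suc (fdb (c u) (c v)) < 1 + kk" using lt by simp
          ultimately show ?thesis by blast
        qed
      qed
    qed
  next
    fix i j assume "i < 1 + kk" "j < 1 + kk" "i \<noteq> j"
    show "F i \<inter> F j = {}"
    proof (rule ccontr)
      assume "F i \<inter> F j \<noteq> {}"
      then obtain e where ei: "e \<in> F i" and ej: "e \<in> F j" by blast
      show False
      proof (cases "i = 0 \<or> j = 0")
        case True
        then have "i \<noteq> 0 \<or> j \<noteq> 0" using \<open>i \<noteq> j\<close> by auto
        have F0: "\<exists>u v. e = {u, v} \<and> c u = c v" if "e \<in> F 0" using that unfolding F_def by auto
        have Fn: "\<exists>u v. e = {u, v} \<and> c u \<noteq> c v" if "e \<in> F n" "n \<noteq> 0" for n
          using that unfolding F_def by auto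
        have "(\<exists>u v. e = {u, v} \<and> c u = c v) \<and> (\<exists>u v. e = {u, v} \<and> c u \<noteq> c v)"
        proof (cases "i = 0")
          case True
          then show ?thesis using F0 Fn[of j] ei ej \<open>i \<noteq> j\<close> by auto
        next
          case False
          then have "j = 0" using \<open>i = 0 \<or> j = 0\<close> by blast
          then show ?thesis using F0 Fn[of i] ei ej False by auto
        qed
        then obtain u v u' v' where "e = {u, v}" "c u = c v" "e = {u', v'}" "c u' \<noteq> c v'" by blast
        then show False using pair_cases[of u v u' v'] by auto
      next
        case False
        obtain u v u' v' where "e = {u, v}" "fdb (c u) (c v) = i - 1" "e = {u', v'}" "fdb (c u') (c v') = j - 1"
          using False ei ej unfolding F_def by auto
        then have "i - 1 = j - 1" using pair_cases[of u v u' v'] fdb_sym by auto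
        then show False using False \<open>i \<noteq> j\<close> by arith
      qed
    qed
  qed
  then show ?thesis unfolding edge_partition_into_def \<alpha>_def[symmetric] kk_def[symmetric] by blast
qed

theorem proposition1:
  fixes V :: "'a set" and E :: "'a set set"
  assumes "graph V E" and "perfect V E"
  shows "edge_partition_into bipartite V E
           (nat \<lceil>log 2 (real (clique_number V E))\<rceil>) \<and>
         edge_partition_into comparability V E
           (1 + nat \<lceil>log 2 (real (independence_number V E))\<rceil>)"
  using part_i[OF assms] part_ii[OF assms] by blast

end
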